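(* Let $f,g\in\mathbb L^2([0,1])$, let $X$ be distributed according to the model below and $\Delta=\|f-g\|$. Let $0<\epsilon\le1/8$ and $d\in\mathbb N^*$ be such that \[ \max\big(\|f-f_d\|^2,\|g-g_d\|^2\big)\le\frac{\epsilon^2}{512\ln(1/\epsilon^2)}. \] Then \[ \mathcal R_{f,g}(\Phi_d^\star)-\mathcal R_{f,g}(\Phi^\star)\le 12\epsilon^2+2\epsilon\Big(1\wedge\frac{10\epsilon}\Delta\Big). \]
   Context: Model: $Y\sim\mathrm{Bernoulli}(1/2)$ independent of a standard Brownian motion $W$ on $[0,1]$, $dX(t)=Yf(t)\,dt+(1-Y)g(t)\,dt+dW(t)$. Risk $\mathcal R_{f,g}(\Phi)=\mathbb P(\Phi(X)\ne Y)$. $(\varphi_j)_{j\ge1}$ is an orthonormal basis of $\mathbb L^2([0,1])$ and $\Pi_d(h)=\sum_{j=1}^d\langle\varphi_j,h\rangle\varphi_j$; $f_d=\Pi_d(f)$, $g_d=\Pi_d(g)$. Bayes classifier: $\Phi^\star(X)=\mathbf 1\{\int_0^1(f-g)(s)\,dX_s\ge\frac12\|f\|^2-\frac12\|g\|^2\}$. Truncated oracle: $\Phi_d^\star(X)=\mathbf 1\{\int_0^1(f_d-g_d)(s)\,dX_s\ge\frac12\|f_d\|^2-\frac12\|g_d\|^2\}$. $\|\cdot\|$ is the $\mathbb L^2$ norm, $a\wedge b=\min\{a,b\}$, and $10\epsilon/\Delta=+\infty$ if $\Delta=0$. *)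

theory Defs
  imports "HOL-Probability.Probability"
begin

definition sq_int :: "(real \<Rightarrow> real) \<Rightarrow> bool" where
  "sq_int h \<longleftrightarrow> h \<in> borel_measurable lborel \<and> set_integrable lborel {0..1} (\<lambda>t. (h t)^2)"

definition ip :: "(real \<Rightarrow> real) \<Rightarrow> (real \<Rightarrow> real) \<Rightarrow> real" where
  "ip h k = (LINT t:{0..1}|lborel. h t * k t)"

definition l2norm :: "(real \<Rightarrow> real) \<Rightarrow> real" where
  "l2norm h = sqrt (ip h h)"

definition proj :: "(nat \<Rightarrow> real \<Rightarrow> real) \<Rightarrow> nat \<Rightarrow> (real \<Rightarrow> real) \<Rightarrow> real \<Rightarrow> real" where
  "proj \<phi> d h = (\<lambda>t. \<Sum>j=1..d. ip (\<phi> j) h * \<phi> j t)"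

definition orthonormal_basis :: "(nat \<Rightarrow> real \<Rightarrow> real) \<Rightarrow> bool" where
  "orthonormal_basis \<phi> \<longleftrightarrow>
     (\<forall>j\<ge>1. sq_int (\<phi> j)) \<and>
     (\<forall>i\<ge>1. \<forall>j\<ge>1. ip (\<phi> i) (\<phi> j) = (if i = j then 1 else 0)) \<and>
     (\<forall>h. sq_int h \<longrightarrow> (\<lambda>d. l2norm (\<lambda>t. h t - proj \<phi> d h t)) \<longlonglongrightarrow> 0)"

text \<open>Wiener integral W h = int_0^1 h(s) dW_s of a standard Brownian motion on [0,1]:
  linear in h, centred Gaussian with variance ||h||^2 (degenerate at 0 when ||h|| = 0).\<close>

definition wiener_integral :: "'w measure \<Rightarrow> ((real \<Rightarrow> real) \<Rightarrow> 'w \<Rightarrow> real) \<Rightarrow> bool" where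
  "wiener_integral M W \<longleftrightarrow>
     (\<forall>h. sq_int h \<longrightarrow> W h \<in> borel_measurable M \<and>
        (l2norm h > 0 \<longrightarrow> distributed M lborel (W h) (normal_density 0 (l2norm h))) \<and>
        (l2norm h = 0 \<longrightarrow> (AE \<omega> in M. W h \<omega> = 0))) \<and>
     (\<forall>h k a b. sq_int h \<longrightarrow> sq_int k \<longrightarrow>
        (AE \<omega> in M. W (\<lambda>t. a * h t + b * k t) \<omega> = a * W h \<omega> + b * W k \<omega>))"

text \<open>The observation functional: int_0^1 h(s) dX_s, where dX = (Y f + (1-Y) g) dt + dW.\<close>

definition obs :: "(real \<Rightarrow> real) \<Rightarrow> (real \<Rightarrow> real) \<Rightarrow> ('w \<Rightarrow> real) \<Rightarrow> ((real \<Rightarrow> real) \<Rightarrow> 'w \<Rightarrow> real)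
                   \<Rightarrow> (real \<Rightarrow> real) \<Rightarrow> 'w \<Rightarrow> real" where
  "obs f g Y W h \<omega> = Y \<omega> * ip h f + (1 - Y \<omega>) * ip h g + W h \<omega>"

definition lin_classifier :: "(real \<Rightarrow> real) \<Rightarrow> (real \<Rightarrow> real) \<Rightarrow> ('w \<Rightarrow> real) \<Rightarrow> ((real \<Rightarrow> real) \<Rightarrow> 'w \<Rightarrow> real)
                   \<Rightarrow> (real \<Rightarrow> real) \<Rightarrow> (real \<Rightarrow> real) \<Rightarrow> 'w \<Rightarrow> real" where
  "lin_classifier f g Y W u v \<omega> =
     (if obs f g Y W (\<lambda>t. u t - v t) \<omega> \<ge> (l2norm u)^2 / 2 - (l2norm v)^2 / 2 then 1 else 0)"

definition risk :: "'w measure \<Rightarrow> ('w \<Rightarrow> real) \<Rightarrow> ('w \<Rightarrow> real) \<Rightarrow> real" where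
  "risk M Y \<Phi> = measure M {\<omega> \<in> space M. \<Phi> \<omega> \<noteq> Y \<omega>}"

end

theory Submission
  imports Defs
begin


lemma ip_alt: "ip h k = integral\<^sup>L lborel (\<lambda>t. indicator {0..1} t * (h t * k t))"
  unfolding ip_def set_lebesgue_integral_def by simp

lemma sq_int_iff: "sq_int h \<longleftrightarrow> h \<in> borel_measurable borel \<and>
   integrable lborel (\<lambda>t. indicator {0..1} t * (h t)^2)"
  unfolding sq_int_def set_integrable_def by simp

lemma prod_integrable:
  assumes "sq_int h" "sq_int k"
  shows "integrable lborel (\<lambda>t. indicator {0..1::real} t * (h t * k t))"
proof (rule Bochner_Integration.integrable_bound)
  show "integrable lborel (\<lambda>t. indicator {0..1::real} t * (h t)^2 + indicator {0..1::real} t * (k t)^2)"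
    using assms unfolding sq_int_iff by auto
  show "(\<lambda>t. indicator {0..1::real} t * (h t * k t)) \<in> borel_measurable lborel"
    using assms unfolding sq_int_iff by auto
  show "AE t in lborel. norm (indicator {0..1::real} t * (h t * k t)) \<le>
      norm (indicator {0..1::real} t * (h t)^2 + indicator {0..1::real} t * (k t)^2)"
  proof (rule AE_I2)
    fix t
    have a: "2 * \<bar>h t\<bar> * \<bar>k t\<bar> \<le> (h t)^2 + (k t)^2"
      using sum_squares_bound[of "\<bar>h t\<bar>" "\<bar>k t\<bar>"] by simp
    have b: "0 \<le> \<bar>h t\<bar> * \<bar>k t\<bar>" by simp
    from a b have "\<bar>h t\<bar> * \<bar>k t\<bar> \<le> (h t)^2 + (k t)^2" by linarith
    then have "\<bar>h t * k t\<bar> \<le> (h t)^2 + (k t)^2" by (simp add: abs_mult)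
    then show "norm (indicator {0..1::real} t * (h t * k t)) \<le>
      norm (indicator {0..1::real} t * (h t)^2 + indicator {0..1::real} t * (k t)^2)"
      by (auto simp: indicator_def)
  qed
qed

lemma sq_int_lin:
  assumes "sq_int h" "sq_int k"
  shows "sq_int (\<lambda>t. a * h t + b * k t)"
proof -
  have e: "(\<lambda>t. indicator {0..1::real} t * (a * h t + b * k t)^2) =
    (\<lambda>t. a^2 * (indicator {0..1::real} t * (h t)^2) + (2*a*b) * (indicator {0..1::real} t * (h t * k t))
        + b^2 * (indicator {0..1::real} t * (k t)^2))"
    by (auto simp: power2_eq_square algebra_simps)
  show ?thesis
    using assms prod_integrable[OF assms] unfolding sq_int_iff e by auto
qed

lemma sq_int_add: "sq_int h \<Longrightarrow> sq_int k \<Longrightarrow> sq_int (\<lambda>t. h t + k t)"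
  using sq_int_lin[of h k 1 1] by simp
lemma sq_int_diff: "sq_int h \<Longrightarrow> sq_int k \<Longrightarrow> sq_int (\<lambda>t. h t - k t)"
  using sq_int_lin[of h k 1 "-1"] by simp
lemma sq_int_cmult: "sq_int h \<Longrightarrow> sq_int (\<lambda>t. a * h t)"
  using sq_int_lin[of h h a 0] by simp
lemma sq_int_zero: "sq_int (\<lambda>t. 0)"
  unfolding sq_int_iff by simp
lemma sq_int_sum: "finite A \<Longrightarrow> (\<And>j. j \<in> A \<Longrightarrow> sq_int (p j)) \<Longrightarrow> sq_int (\<lambda>t. \<Sum>j\<in>A. c j * p j t)"
proof (induction A rule: finite_induct)
  case empty then show ?case using sq_int_zero by simp
next
  case (insert x F)
  then show ?case using sq_int_add[OF sq_int_cmult[of "p x" "c x"], of "\<lambda>t. \<Sum>j\<in>F. c j * p j t"] by simp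
qed

lemma ip_lin_left:
  assumes "sq_int h" "sq_int k" "sq_int l"
  shows "ip (\<lambda>t. a * h t + b * k t) l = a * ip h l + b * ip k l"
proof -
  have e: "(\<lambda>t. indicator {0..1::real} t * ((a * h t + b * k t) * l t)) =
    (\<lambda>t. a * (indicator {0..1::real} t * (h t * l t)) + b * (indicator {0..1::real} t * (k t * l t)))"
    by (auto simp: algebra_simps)
  show ?thesis unfolding ip_alt e
    using prod_integrable[OF assms(1,3)] prod_integrable[OF assms(2,3)] by simp
qed

lemma ip_sym: "ip h k = ip k h"
  unfolding ip_alt by (simp add: mult.commute)

lemma ip_nonneg: "ip h h \<ge> 0"
  unfolding ip_alt by (rule integral_nonneg_AE) (auto simp: indicator_def)

lemma l2norm_sq: "(l2norm h)^2 = ip h h"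
  unfolding l2norm_def using ip_nonneg by simp

lemma ip_add_left: "sq_int h \<Longrightarrow> sq_int k \<Longrightarrow> sq_int l \<Longrightarrow> ip (\<lambda>t. h t + k t) l = ip h l + ip k l"
  using ip_lin_left[of h k l 1 1] by simp
lemma ip_diff_left: "sq_int h \<Longrightarrow> sq_int k \<Longrightarrow> sq_int l \<Longrightarrow> ip (\<lambda>t. h t - k t) l = ip h l - ip k l"
  using ip_lin_left[of h k l 1 "-1"] by simp
lemma ip_add_right: "sq_int h \<Longrightarrow> sq_int k \<Longrightarrow> sq_int l \<Longrightarrow> ip l (\<lambda>t. h t + k t) = ip l h + ip l k"
  using ip_add_left[of h k l] by (simp add: ip_sym)
lemma ip_diff_right: "sq_int h \<Longrightarrow> sq_int k \<Longrightarrow> sq_int l \<Longrightarrow> ip l (\<lambda>t. h t - k t) = ip l h - ip l k"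
  using ip_diff_left[of h k l] by (simp add: ip_sym)

lemma ip_sum_left:
  assumes "finite A" "\<And>j. j \<in> A \<Longrightarrow> sq_int (p j)" "sq_int l"
  shows "ip (\<lambda>t. \<Sum>j\<in>A. c j * p j t) l = (\<Sum>j\<in>A. c j * ip (p j) l)"
  using assms(1,2)
proof (induction A rule: finite_induct)
  case empty then show ?case unfolding ip_alt by simp
next
  case (insert x F)
  have "ip (\<lambda>t. \<Sum>j\<in>insert x F. c j * p j t) l = ip (\<lambda>t. c x * p x t + 1 * (\<Sum>j\<in>F. c j * p j t)) l"
    using insert by simp
  also have "\<dots> = c x * ip (p x) l + 1 * ip (\<lambda>t. \<Sum>j\<in>F. c j * p j t) l"
    by (rule ip_lin_left) (use insert assms(3) sq_int_sum[of F p c] in auto)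
  finally show ?case using insert by simp
qed

lemma sq_int_proj: "orthonormal_basis \<phi> \<Longrightarrow> sq_int (proj \<phi> d h)"
  unfolding proj_def orthonormal_basis_def
  by (rule sq_int_sum[where p=\<phi> and c="\<lambda>j. ip (\<phi> j) h", simplified]) auto

lemma orth_basis:
  assumes "orthonormal_basis \<phi>" "sq_int h" "j \<in> {1..d}"
  shows "ip (\<phi> j) (\<lambda>t. h t - proj \<phi> d h t) = 0"
proof -
  have sj: "sq_int (\<phi> j)" using assms unfolding orthonormal_basis_def by auto
  have "ip (\<phi> j) (\<lambda>t. h t - proj \<phi> d h t) = ip (\<phi> j) h - ip (\<phi> j) (proj \<phi> d h)"
    by (rule ip_diff_right) (use assms sj sq_int_proj in auto)
  also have "ip (\<phi> j) (proj \<phi> d h) = ip (proj \<phi> d h) (\<phi> j)" by (rule ip_sym)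
  also have "\<dots> = (\<Sum>i\<in>{1..d}. ip (\<phi> i) h * ip (\<phi> i) (\<phi> j))"
    unfolding proj_def
    by (rule ip_sum_left) (use assms sj in \<open>auto simp: orthonormal_basis_def\<close>)
  also have "\<dots> = (\<Sum>i\<in>{1..d}. if i = j then ip (\<phi> i) h else 0)"
    by (rule sum.cong) (use assms in \<open>auto simp: orthonormal_basis_def\<close>)
  also have "\<dots> = ip (\<phi> j) h" using assms(3) by simp
  finally show ?thesis by simp
qed

lemma orth_proj:
  assumes "orthonormal_basis \<phi>" "sq_int h" "sq_int k"
  shows "ip (proj \<phi> d k) (\<lambda>t. h t - proj \<phi> d h t) = 0"
proof -
  have "ip (proj \<phi> d k) (\<lambda>t. h t - proj \<phi> d h t) =
     (\<Sum>j\<in>{1..d}. ip (\<phi> j) k * ip (\<phi> j) (\<lambda>t. h t - proj \<phi> d h t))"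
    unfolding proj_def[of \<phi> d k]
    by (rule ip_sum_left) (use assms sq_int_diff sq_int_proj in \<open>auto simp: orthonormal_basis_def\<close>)
  also have "\<dots> = 0" using orth_basis[OF assms(1,2)] by simp
  finally show ?thesis .
qed




definition NN :: "real measure" where
  "NN = density lborel (\<lambda>x. ennreal (std_normal_density x))"

definition Gs :: "real \<Rightarrow> real" where
  "Gs s = measure NN {..< -s/2} / 2 + measure NN {s/2..} / 2"

lemma NN_prob: "prob_space NN"
  unfolding NN_def by (rule prob_space_normal_density) simp

lemma sets_NN[simp]: "sets NN = sets borel"
  by (simp add: NN_def)
lemma space_NN[simp]: "space NN = UNIV"
  by (simp add: NN_def)

lemma std_le1: "std_normal_density x \<le> 1"
proof -
  have "1 \<le> sqrt (2 * pi)" using pi_gt3 by simp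
  then have "1 / sqrt (2 * pi) \<le> 1" by simp
  moreover have "exp (- x\<^sup>2 / 2) \<le> 1" by simp
  ultimately show ?thesis unfolding std_normal_density_def
    by (meson exp_ge_zero mult_le_one order_trans zero_le_divide_1_iff real_sqrt_ge_zero
        zero_le_mult_iff less_eq_real_def pi_gt_zero)
qed

lemma NN_interval: assumes "a \<le> b" shows "measure NN {a..<b} \<le> b - a"
proof -
  interpret prob_space NN by (rule NN_prob)
  have "emeasure NN {a..<b} = (\<integral>\<^sup>+x. ennreal (std_normal_density x) * indicator {a..<b} x \<partial>lborel)"
    unfolding NN_def by (subst emeasure_density) auto
  also have "\<dots> \<le> (\<integral>\<^sup>+x. indicator {a..<b} x \<partial>lborel)"
    by (rule nn_integral_mono) (auto simp: indicator_def std_le1)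
  also have "\<dots> = ennreal (b - a)" using assms by simp
  finally have "ennreal (measure NN {a..<b}) \<le> ennreal (b - a)"
    by (simp add: emeasure_eq_measure)
  then show ?thesis using assms by (simp add: ennreal_le_iff)
qed

lemma Gs_diff: assumes "0 \<le> \<sigma>" "\<sigma> \<le> \<Delta>" shows "Gs \<sigma> - Gs \<Delta> \<le> (\<Delta> - \<sigma>) / 2"
proof -
  interpret prob_space NN by (rule NN_prob)
  have u1: "{..< -\<sigma>/2} = {..< -\<Delta>/2} \<union> {-\<Delta>/2..< -\<sigma>/2}" using assms by auto
  have m1: "measure NN {..< -\<sigma>/2} = measure NN {..< -\<Delta>/2} + measure NN {-\<Delta>/2..< -\<sigma>/2}"
    unfolding u1 by (rule finite_measure_Union) auto
  have u2: "{\<sigma>/2..} = {\<Delta>/2..} \<union> {\<sigma>/2..< \<Delta>/2}" using assms by auto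
  have m2: "measure NN {\<sigma>/2..} = measure NN {\<Delta>/2..} + measure NN {\<sigma>/2..<\<Delta>/2}"
    unfolding u2 by (rule finite_measure_Union) auto
  have "measure NN {-\<Delta>/2..< -\<sigma>/2} \<le> -\<sigma>/2 - -\<Delta>/2" by (rule NN_interval) (use assms in auto)
  moreover have "measure NN {\<sigma>/2..<\<Delta>/2} \<le> \<Delta>/2 - \<sigma>/2" by (rule NN_interval) (use assms in auto)
  ultimately show ?thesis unfolding Gs_def m1 m2 by (simp add: field_simps)
qed

lemma gauss_risk:
  assumes "prob_space M" "X \<in> borel_measurable M" "\<sigma> \<ge> 0"
    "\<sigma> > 0 \<Longrightarrow> distributed M lborel X (normal_density 0 \<sigma>)"
    "\<sigma> = 0 \<Longrightarrow> (AE \<omega> in M. X \<omega> = 0)"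
  shows "measure M {\<omega>\<in>space M. X \<omega> < -\<sigma>\<^sup>2/2}/2 + measure M {\<omega>\<in>space M. \<sigma>\<^sup>2/2 \<le> X \<omega>}/2 = Gs \<sigma>"
proof (cases "\<sigma> = 0")
  case True
  interpret prob_space M by fact
  have [measurable]: "X \<in> borel_measurable M" by fact
  have a: "measure M {\<omega>\<in>space M. X \<omega> < 0} = measure M {}"
    by (rule measure_eq_AE) (use assms(5)[OF True] in auto)
  have b: "measure M {\<omega>\<in>space M. 0 \<le> X \<omega>} = measure M (space M)"
    by (rule measure_eq_AE) (use assms(5)[OF True] in auto)
  interpret N: prob_space NN by (rule NN_prob)
  have "measure NN {..<0} + measure NN {0..} = measure NN ({..<0} \<union> {0..})"
    by (rule N.finite_measure_Union[symmetric]) auto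
  also have "({..<0::real} \<union> {0..}) = space NN" by auto
  finally have c: "measure NN {..<0} + measure NN {0..} = 1" using N.prob_space by simp
  show ?thesis using a b c True unfolding Gs_def by (simp add: prob_space)
next
  case False
  interpret prob_space M by fact
  have sp: "\<sigma> > 0" using False assms(3) by simp
  let ?Z = "\<lambda>\<omega>. (X \<omega> - 0) / \<sigma>"
  have D: "distributed M lborel ?Z std_normal_density"
    using assms(4)[OF sp] normal_standard_normal_convert[OF sp] by simp
  then have DD: "distr M lborel ?Z = NN" unfolding NN_def
    by (simp add: distributed_distr_eq_density)
  have Zm: "?Z \<in> measurable M lborel" using distributed_measurable[OF D] by simp
  have e1: "{\<omega>\<in>space M. X \<omega> < -\<sigma>\<^sup>2/2} = ?Z -` {..< -\<sigma>/2} \<inter> space M"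
    using sp by (auto simp: divide_less_eq power2_eq_square field_simps)
  have e2: "{\<omega>\<in>space M. \<sigma>\<^sup>2/2 \<le> X \<omega>} = ?Z -` {\<sigma>/2..} \<inter> space M"
    using sp by (auto simp: le_divide_eq power2_eq_square field_simps)
  have "measure M (?Z -` {..< -\<sigma>/2} \<inter> space M) = measure NN {..< -\<sigma>/2}"
    using measure_distr[OF Zm, of "{..< -\<sigma>/2}"] DD by simp
  moreover have "measure M (?Z -` {\<sigma>/2..} \<inter> space M) = measure NN {\<sigma>/2..}"
    using measure_distr[OF Zm, of "{\<sigma>/2..}"] DD by simp
  ultimately show ?thesis unfolding e1 e2 Gs_def by simp
qed




lemma risk_formula:
  fixes M :: "'w measure" and Y X :: "'w \<Rightarrow> real" and p q c s :: real
  assumes "prob_space M" "Y \<in> borel_measurable M" "\<forall>\<omega>\<in>space M. Y \<omega> \<in> {0, 1}"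
    "measure M {\<omega> \<in> space M. Y \<omega> = 1} = 1/2" "X \<in> borel_measurable M"
    "prob_space.indep_var M borel Y borel X" "p - c = s/2" "q - c = -s/2"
  shows "measure M {\<omega>\<in>space M. (if Y \<omega> * p + (1 - Y \<omega>) * q + X \<omega> \<ge> c then 1 else 0) \<noteq> Y \<omega>}
     = measure M {\<omega>\<in>space M. X \<omega> < -s/2}/2 + measure M {\<omega>\<in>space M. s/2 \<le> X \<omega>}/2"
proof -
  interpret prob_space M by fact
  have [measurable]: "Y \<in> borel_measurable M" "X \<in> borel_measurable M" by fact+
  let ?A = "{\<omega>\<in>space M. Y \<omega> = 1 \<and> X \<omega> < -s/2}"
  let ?B = "{\<omega>\<in>space M. Y \<omega> = 0 \<and> s/2 \<le> X \<omega>}"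
  have eq: "{\<omega>\<in>space M. (if Y \<omega> * p + (1 - Y \<omega>) * q + X \<omega> \<ge> c then 1 else 0) \<noteq> Y \<omega>} = ?A \<union> ?B"
  proof (rule set_eqI)
    fix \<omega>
    show "\<omega> \<in> {\<omega>\<in>space M. (if Y \<omega> * p + (1 - Y \<omega>) * q + X \<omega> \<ge> c then 1 else 0) \<noteq> Y \<omega>} \<longleftrightarrow> \<omega> \<in> ?A \<union> ?B"
    proof (cases "\<omega> \<in> space M")
      case True
      then have "Y \<omega> = 0 \<or> Y \<omega> = 1" using assms(3) by auto
      then show ?thesis
      proof
        assume h: "Y \<omega> = 0"
        have qq: "q = c - s/2" using assms(8) by simp
        have "(c \<le> Y \<omega> * p + (1 - Y \<omega>) * q + X \<omega>) = (s/2 \<le> X \<omega>)" using h by (simp add: qq)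
        then show ?thesis using h True by simp
      next
        assume h: "Y \<omega> = 1"
        have pp: "p = c + s/2" using assms(7) by simp
        have "(c \<le> Y \<omega> * p + (1 - Y \<omega>) * q + X \<omega>) = (\<not> X \<omega> < -s/2)" using h by (simp add: pp) linarith
        then show ?thesis using h True by simp
      qed
    qed auto
  qed
  have mU: "measure M (?A \<union> ?B) = measure M ?A + measure M ?B"
    by (rule finite_measure_Union) auto
  have "measure M ?A = prob ((\<lambda>x. (Y x, X x)) -` ({1} \<times> {..< -s/2}) \<inter> space M)"
    by (rule arg_cong[where f=prob]) auto
  also have "\<dots> = prob (Y -` {1} \<inter> space M) * prob (X -` {..< -s/2} \<inter> space M)"
    by (rule indep_varD[OF assms(6)]) auto
  also have "prob (Y -` {1} \<inter> space M) = 1/2"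
    using assms(4) by (simp add: vimage_def Int_def conj_commute)
  also have "prob (X -` {..< -s/2} \<inter> space M) = measure M {\<omega>\<in>space M. X \<omega> < -s/2}"
    by (rule arg_cong[where f=prob]) auto
  finally have mA: "measure M ?A = measure M {\<omega>\<in>space M. X \<omega> < -s/2} / 2" by simp
  have "measure M ?B = prob ((\<lambda>x. (Y x, X x)) -` ({0} \<times> {s/2..}) \<inter> space M)"
    by (rule arg_cong[where f=prob]) auto
  also have "\<dots> = prob (Y -` {0} \<inter> space M) * prob (X -` {s/2..} \<inter> space M)"
    by (rule indep_varD[OF assms(6)]) auto
  also have "Y -` {0} \<inter> space M = space M - {\<omega> \<in> space M. Y \<omega> = 1}"
    using assms(3) by auto
  also have "prob (space M - {\<omega> \<in> space M. Y \<omega> = 1}) = 1/2"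
    using assms(4) by (subst prob_compl) auto
  also have "prob (X -` {s/2..} \<inter> space M) = measure M {\<omega>\<in>space M. s/2 \<le> X \<omega>}"
    by (rule arg_cong[where f=prob]) auto
  finally have mB: "measure M ?B = measure M {\<omega>\<in>space M. s/2 \<le> X \<omega>} / 2" by simp
  show ?thesis unfolding eq mU mA mB ..
qed

lemma key_identity:
  assumes "sq_int u" "sq_int v" "sq_int f" "sq_int g"
    "ip (\<lambda>t. u t - v t) f = ip (\<lambda>t. u t - v t) u" "ip (\<lambda>t. u t - v t) g = ip (\<lambda>t. u t - v t) v"
  shows "ip (\<lambda>t. u t - v t) f - ((l2norm u)^2/2 - (l2norm v)^2/2) = (l2norm (\<lambda>t. u t - v t))^2 / 2"
    and "ip (\<lambda>t. u t - v t) g - ((l2norm u)^2/2 - (l2norm v)^2/2) = -((l2norm (\<lambda>t. u t - v t))^2 / 2)"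
proof -
  have a: "ip (\<lambda>t. u t - v t) u = ip u u - ip v u" using assms by (simp add: ip_diff_left)
  have b: "ip (\<lambda>t. u t - v t) v = ip u v - ip v v" using assms by (simp add: ip_diff_left)
  have c: "ip (\<lambda>t. u t - v t) (\<lambda>t. u t - v t) = ip u u - 2 * ip u v + ip v v"
    using assms by (simp add: ip_diff_left ip_diff_right sq_int_diff ip_sym[of v u])
  show "ip (\<lambda>t. u t - v t) f - ((l2norm u)^2/2 - (l2norm v)^2/2) = (l2norm (\<lambda>t. u t - v t))^2 / 2"
    unfolding l2norm_sq assms(5) a c by (simp add: ip_sym[of v u] field_simps)
  show "ip (\<lambda>t. u t - v t) g - ((l2norm u)^2/2 - (l2norm v)^2/2) = -((l2norm (\<lambda>t. u t - v t))^2 / 2)"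
    unfolding l2norm_sq assms(6) b c by (simp add: field_simps)
qed

lemma final_ineq:
  fixes \<sigma> \<Delta> E m \<epsilon> :: real
  assumes "\<sigma> \<ge> 0" "\<Delta> \<ge> 0" "\<Delta>^2 = \<sigma>^2 + E" "E \<ge> 0" "E \<le> 4 * m"
    "m \<le> \<epsilon>^2 / (512 * ln (1 / \<epsilon>^2))" "0 < \<epsilon>" "\<epsilon> \<le> 1/8"
  shows "(\<Delta> - \<sigma>)/2 \<le> 12 * \<epsilon>^2 + 2 * \<epsilon> * (if \<Delta> = 0 then 1 else min 1 (10 * \<epsilon> / \<Delta>))"
proof -
  have "\<epsilon>^2 \<le> (1/8)^2" using assms(7,8) by (intro power_mono) auto
  then have "64 \<le> 1 / \<epsilon>^2" using assms(7) by (simp add: field_simps)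
  then have "exp 1 \<le> 1 / \<epsilon>^2" using exp_le by linarith
  then have L: "1 \<le> ln (1 / \<epsilon>^2)" using assms(7) by (simp add: ln_ge_iff)
  have "\<epsilon>^2 / (512 * ln (1 / \<epsilon>^2)) \<le> \<epsilon>^2 / 512"
    using L by (intro divide_left_mono) auto
  then have "m \<le> \<epsilon>^2/512" using assms(6) by linarith
  then have E: "E \<le> 4 * \<epsilon>^2" using assms(5) zero_le_power2[of \<epsilon>] by linarith
  have sD: "\<sigma> \<le> \<Delta>" by (rule power2_le_imp_le) (use assms(2-4) in auto)
  have P: "(\<Delta> - \<sigma>) * (\<Delta> + \<sigma>) = E" using assms(3) by (simp add: power2_eq_square algebra_simps)
  have "(\<Delta> - \<sigma>) * (\<Delta> - \<sigma>) \<le> (\<Delta> - \<sigma>) * (\<Delta> + \<sigma>)"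
    by (rule mult_left_mono) (use sD assms(1) in auto)
  then have Q1: "(\<Delta> - \<sigma>) * (\<Delta> - \<sigma>) \<le> E" using P by simp
  have "(\<Delta> - \<sigma>) * \<Delta> \<le> (\<Delta> - \<sigma>) * (\<Delta> + \<sigma>)"
    by (rule mult_left_mono) (use sD assms(1) in auto)
  then have Q2: "(\<Delta> - \<sigma>) * \<Delta> \<le> E" using P by simp
  have R1: "\<Delta> - \<sigma> \<le> 2 * \<epsilon>"
  proof (rule ccontr)
    assume "\<not> ?thesis"
    then have "2*\<epsilon> * (2*\<epsilon>) < (\<Delta> - \<sigma>) * (\<Delta> - \<sigma>)" using assms(7)
      by (intro mult_strict_mono) auto
    then show False using Q1 E by (simp add: power2_eq_square)
  qed
  show ?thesis
  proof (cases "\<Delta> = 0")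
    case True then show ?thesis using sD assms(1,7) by simp
  next
    case False
    then have Dp: "\<Delta> > 0" using assms(2) by simp
    have A: "(\<Delta> - \<sigma>)/2 \<le> 2 * \<epsilon>" using R1 assms(7) by simp
    have B: "(\<Delta> - \<sigma>)/2 \<le> 2 * \<epsilon> * (10 * \<epsilon> / \<Delta>)"
    proof -
      have "(\<Delta> - \<sigma>) \<le> 4 * \<epsilon>^2 / \<Delta>" using Q2 E Dp by (simp add: le_divide_eq)
      also have "\<dots> \<le> 40 * \<epsilon>^2 / \<Delta>" using Dp by (intro divide_right_mono) auto
      finally show ?thesis by (simp add: power2_eq_square field_simps)
    qed
    have "(\<Delta> - \<sigma>)/2 \<le> 2 * \<epsilon> * min 1 (10 * \<epsilon> / \<Delta>)"
      using A B by (simp add: min_def)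
    moreover have "0 \<le> 12 * \<epsilon>^2" by simp
    moreover have eq: "(if \<Delta> = 0 then 1 else min 1 (10 * \<epsilon> / \<Delta>)) = min 1 (10 * \<epsilon> / \<Delta>)"
      using False by simp
    ultimately show ?thesis unfolding eq by linarith
  qed
qed




lemma ip_expand_add: "sq_int h \<Longrightarrow> sq_int k \<Longrightarrow>
  ip (\<lambda>t. h t + k t) (\<lambda>t. h t + k t) = ip h h + 2 * ip h k + ip k k"
  by (simp add: ip_add_left ip_add_right sq_int_add ip_sym[of k h])

lemma ip_expand_diff: "sq_int h \<Longrightarrow> sq_int k \<Longrightarrow>
  ip (\<lambda>t. h t - k t) (\<lambda>t. h t - k t) = ip h h - 2 * ip h k + ip k k"
  by (simp add: ip_diff_left ip_diff_right sq_int_diff ip_sym[of k h])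

lemma orth_a:
  assumes "orthonormal_basis \<phi>" "sq_int h" "sq_int k" "sq_int l"
  shows "ip (\<lambda>t. proj \<phi> d k t - proj \<phi> d l t) (\<lambda>t. h t - proj \<phi> d h t) = 0"
proof -
  have "ip (\<lambda>t. proj \<phi> d k t - proj \<phi> d l t) (\<lambda>t. h t - proj \<phi> d h t) =
     ip (proj \<phi> d k) (\<lambda>t. h t - proj \<phi> d h t) - ip (proj \<phi> d l) (\<lambda>t. h t - proj \<phi> d h t)"
    by (rule ip_diff_left[of "proj \<phi> d k" "proj \<phi> d l", simplified])
       (use assms sq_int_proj sq_int_diff in auto)
  then show ?thesis using orth_proj[OF assms(1,2)] assms by simp
qed

lemma risk_lin:
  fixes M :: "'w measure" and Y :: "'w \<Rightarrow> real" and W :: "(real \<Rightarrow> real) \<Rightarrow> 'w \<Rightarrow> real"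
  assumes "prob_space M"
    and "Y \<in> borel_measurable M"
    and "\<forall>\<omega>\<in>space M. Y \<omega> \<in> {0, 1}"
    and "measure M {\<omega> \<in> space M. Y \<omega> = 1} = 1/2"
    and "wiener_integral M W"
    and "\<forall>h. sq_int h \<longrightarrow> prob_space.indep_var M borel Y borel (W h)"
    and "sq_int u" "sq_int v" "sq_int f" "sq_int g"
    "ip (\<lambda>t. u t - v t) f = ip (\<lambda>t. u t - v t) u" "ip (\<lambda>t. u t - v t) g = ip (\<lambda>t. u t - v t) v"
  shows "risk M Y (lin_classifier f g Y W u v) = Gs (l2norm (\<lambda>t. u t - v t))"
proof -
  let ?a = "\<lambda>t. u t - v t"
  have sa: "sq_int ?a" using assms sq_int_diff by auto
  have Wm: "W ?a \<in> borel_measurable M" and Wd: "l2norm ?a > 0 \<Longrightarrow> distributed M lborel (W ?a) (normal_density 0 (l2norm ?a))"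
    and Wz: "l2norm ?a = 0 \<Longrightarrow> (AE \<omega> in M. W ?a \<omega> = 0)"
    using assms(5) sa unfolding wiener_integral_def by auto
  have ki: "ip ?a f - ((l2norm u)^2/2 - (l2norm v)^2/2) = (l2norm ?a)^2 / 2"
    "ip ?a g - ((l2norm u)^2/2 - (l2norm v)^2/2) = - ((l2norm ?a)^2) / 2"
    using key_identity[OF assms(7-12)] by auto
  have "risk M Y (lin_classifier f g Y W u v) =
    measure M {\<omega>\<in>space M. (if Y \<omega> * ip ?a f + (1 - Y \<omega>) * ip ?a g + W ?a \<omega> \<ge> ((l2norm u)^2/2 - (l2norm v)^2/2) then 1 else 0) \<noteq> Y \<omega>}"
    unfolding risk_def lin_classifier_def obs_def by simp
  also have "\<dots> = measure M {\<omega>\<in>space M. W ?a \<omega> < -((l2norm ?a)^2)/2}/2 + measure M {\<omega>\<in>space M. (l2norm ?a)^2/2 \<le> W ?a \<omega>}/2"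
    by (rule risk_formula[OF assms(1-4) Wm]) (use assms(6) sa ki in auto)
  also have "\<dots> = Gs (l2norm ?a)"
    by (rule gauss_risk[OF assms(1) Wm]) (use Wd Wz ip_nonneg in \<open>auto simp: l2norm_def\<close>)
  finally show ?thesis .
qed

theorem lemma1:
  fixes M :: "'w measure" and Y :: "'w \<Rightarrow> real" and W :: "(real \<Rightarrow> real) \<Rightarrow> 'w \<Rightarrow> real"
    and \<phi> :: "nat \<Rightarrow> real \<Rightarrow> real" and f g :: "real \<Rightarrow> real"
    and \<epsilon> :: real and d :: nat
  assumes "prob_space M"
    and "Y \<in> borel_measurable M"
    and "\<forall>\<omega>\<in>space M. Y \<omega> \<in> {0, 1}"
    and "measure M {\<omega> \<in> space M. Y \<omega> = 1} = 1/2"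
    and "wiener_integral M W"
    and "\<forall>h. sq_int h \<longrightarrow> prob_space.indep_var M borel Y borel (W h)"
    and "orthonormal_basis \<phi>"
    and "sq_int f" and "sq_int g"
    and "0 < \<epsilon>" and "\<epsilon> \<le> 1/8"
    and "d \<ge> 1"
    and "max ((l2norm (\<lambda>t. f t - proj \<phi> d f t))^2) ((l2norm (\<lambda>t. g t - proj \<phi> d g t))^2)
           \<le> \<epsilon>^2 / (512 * ln (1 / \<epsilon>^2))"
  shows "risk M Y (lin_classifier f g Y W (proj \<phi> d f) (proj \<phi> d g))
           - risk M Y (lin_classifier f g Y W f g)
         \<le> 12 * \<epsilon>^2 + 2 * \<epsilon> * (let \<Delta> = l2norm (\<lambda>t. f t - g t) in
                                   if \<Delta> = 0 then 1 else min 1 (10 * \<epsilon> / \<Delta>))"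
proof -
  let ?u = "proj \<phi> d f" and ?v = "proj \<phi> d g"
  let ?a = "\<lambda>t. ?u t - ?v t"
  let ?r = "\<lambda>t. f t - ?u t" and ?s = "\<lambda>t. g t - ?v t"
  let ?e = "\<lambda>t. ?r t - ?s t"
  have su: "sq_int ?u" and sv: "sq_int ?v" using sq_int_proj assms(7) by auto
  have sa: "sq_int ?a" and sr: "sq_int ?r" and ss: "sq_int ?s"
    using su sv assms(8,9) sq_int_diff by auto
  have se: "sq_int ?e" using sr ss sq_int_diff by auto
  have ar: "ip ?a ?r = 0" by (rule orth_a) (use assms in auto)
  have as: "ip ?a ?s = 0" by (rule orth_a) (use assms in auto)
  have af: "ip ?a f = ip ?a ?u"
    using ip_diff_right[OF assms(8) su sa] ar by simp
  have ag: "ip ?a g = ip ?a ?v"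
    using ip_diff_right[OF assms(9) sv sa] as by simp
  have ae: "ip ?a ?e = 0"
    using ip_diff_right[OF sr ss sa] ar as by simp
  have R1: "risk M Y (lin_classifier f g Y W ?u ?v) = Gs (l2norm ?a)"
    by (rule risk_lin[OF assms(1-6) su sv assms(8,9) af ag])
  have R2: "risk M Y (lin_classifier f g Y W f g) = Gs (l2norm (\<lambda>t. f t - g t))"
    by (rule risk_lin[OF assms(1-6) assms(8,9) assms(8,9)]) auto
  define \<sigma> where "\<sigma> = l2norm ?a"
  define \<Delta> where "\<Delta> = l2norm (\<lambda>t. f t - g t)"
  define E where "E = ip ?e ?e"
  define m where "m = max ((l2norm ?r)^2) ((l2norm ?s)^2)"
  have fg: "(\<lambda>t. f t - g t) = (\<lambda>t. ?a t + ?e t)" by (rule ext) simp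
  have D2: "\<Delta>^2 = \<sigma>^2 + E"
    unfolding \<Delta>_def \<sigma>_def E_def l2norm_sq fg ip_expand_add[OF sa se] ae by simp
  have E0: "E \<ge> 0" unfolding E_def by (rule ip_nonneg)
  have "E + ip (\<lambda>t. ?r t + ?s t) (\<lambda>t. ?r t + ?s t) = 2 * ip ?r ?r + 2 * ip ?s ?s"
    unfolding E_def ip_expand_add[OF sr ss] ip_expand_diff[OF sr ss] by simp
  moreover have "ip (\<lambda>t. ?r t + ?s t) (\<lambda>t. ?r t + ?s t) \<ge> 0" by (rule ip_nonneg)
  moreover have "ip ?r ?r \<le> m" "ip ?s ?s \<le> m" unfolding m_def l2norm_sq by auto
  ultimately have E4: "E \<le> 4 * m" by linarith
  have sD: "\<sigma> \<le> \<Delta>"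
    by (rule power2_le_imp_le) (use D2 E0 ip_nonneg in \<open>auto simp: \<Delta>_def l2norm_def\<close>)
  have "Gs \<sigma> - Gs \<Delta> \<le> (\<Delta> - \<sigma>) / 2"
    by (rule Gs_diff) (use sD ip_nonneg in \<open>auto simp: \<sigma>_def l2norm_def\<close>)
  also have "\<dots> \<le> 12 * \<epsilon>^2 + 2 * \<epsilon> * (if \<Delta> = 0 then 1 else min 1 (10 * \<epsilon> / \<Delta>))"
    by (rule final_ineq[OF _ _ D2 E0 E4]) (use assms(10,11,13) ip_nonneg in \<open>auto simp: m_def \<sigma>_def \<Delta>_def l2norm_def\<close>)
  finally show ?thesis using R1 R2 unfolding \<sigma>_def \<Delta>_def Let_def by simp
qed


end
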